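(* Let $q$ be a prime and $P\ge2$, $M\ge1$, $K\ge1$ integers. Define $$E_2(q,P,M,K):=\sum_{\chi\ne\chi_0}\sum_{m=1}^{M}\frac1m\sum_{k>K}\frac{\mu(k)}{k}\log\bigl(L_P(km,\chi^{km})\bigr).$$ Then $$|E_2(q,P,M,K)|\le\frac{2P(q-1)}{K^2(P-1)(P^K-1)},$$ a bound independent of $M$.
   Context: $\chi$ runs over the non-principal Dirichlet characters modulo $q$ ($\chi_0$ principal), $\mu$ is the Möbius function, and for a Dirichlet character $\chi$ and $\Re(s)>1$ (or $\Re(s)\ge1$ when $\chi$ is non-principal), $L_P(s,\chi):=\prod_{p>P}\bigl(1-\chi(p)p^{-s}\bigr)^{-1}=L(s,\chi)\prod_{p\le P}\bigl(1-\chi(p)p^{-s}\bigr)$, with $\log$ the branch given by $\log L_P(s,\chi)=-\sum_{p>P}\log(1-\chi(p)p^{-s})$ using the principal logarithm series. *)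

theory Defs
  imports "HOL-Analysis.Analysis" "HOL-Computational_Algebra.Primes" "HOL-Computational_Algebra.Squarefree"
begin

definition dirichlet_char :: "nat \<Rightarrow> (nat \<Rightarrow> complex) \<Rightarrow> bool" where
  "dirichlet_char q chi \<longleftrightarrow>
     (\<forall>m n. chi (m * n) = chi m * chi n) \<and> chi 1 = 1 \<and>
     (\<forall>n. chi (n + q) = chi n) \<and> (\<forall>n. chi n = 0 \<longleftrightarrow> \<not> coprime n q)"

definition principal_char :: "nat \<Rightarrow> nat \<Rightarrow> complex" where
  "principal_char q n = (if coprime n q then 1 else 0)"

definition moebius_mu :: "nat \<Rightarrow> int" where
  "moebius_mu n = (if n = 0 \<or> \<not> squarefree n then 0 else (-1) ^ card (prime_factors n))"

definition log_LP :: "nat \<Rightarrow> nat \<Rightarrow> (nat \<Rightarrow> complex) \<Rightarrow> complex" where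
  "log_LP P s chi = - (\<Sum>\<^sub>\<infinity>p\<in>{p. prime p \<and> p > P}. Ln (1 - chi p / of_nat p ^ s))"

definition E2 :: "nat \<Rightarrow> nat \<Rightarrow> nat \<Rightarrow> nat \<Rightarrow> complex" where
  "E2 q P M K = (\<Sum>chi\<in>{chi. dirichlet_char q chi \<and> chi \<noteq> principal_char q}.
      \<Sum>m=1..M. (1 / of_nat m) *
        (\<Sum>\<^sub>\<infinity>k\<in>{K<..}. (of_int (moebius_mu k) / of_nat k) *
            log_LP P (k * m) (\<lambda>n. chi n ^ (k * m))))"

end

theory Submission
  imports Defs "HOL-Number_Theory.Number_Theory"
begin


lemma char_add_mult:
  assumes "dirichlet_char q chi"
  shows "chi (n + j * q) = chi n"
proof (induction j)
  case (Suc j)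
  have "chi (n + Suc j * q) = chi ((n + j * q) + q)" by (simp add: algebra_simps)
  also have "\<dots> = chi (n + j*q)" using assms unfolding dirichlet_char_def by blast
  finally show ?case using Suc by simp
qed simp

lemma char_mod:
  assumes "dirichlet_char q chi"
  shows "chi n = chi (n mod q)"
  using char_add_mult[OF assms, of "n mod q" "n div q"] by simp

lemma char_pow:
  assumes "dirichlet_char q chi"
  shows "chi (n ^ k) = chi n ^ k"
  using assms by (induction k) (auto simp: dirichlet_char_def)

lemma char_pow_q1:
  assumes "dirichlet_char q chi" "prime q" "coprime n q"
  shows "chi n ^ (q - 1) = 1"
proof -
  have q1: "q > 1" using assms(2) prime_gt_1_nat by blast
  have "\<not> q dvd n"
  proof
    assume "q dvd n"
    then have "q dvd gcd n q" by simp
    then show False using assms(3) q1 by simp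
  qed
  then have "[n ^ (q - 1) = 1] (mod q)" using fermat_theorem assms(2) by blast
  then have "n ^ (q - 1) mod q = 1 mod q" by (simp add: cong_def)
  then have "chi (n ^ (q - 1)) = chi 1"
    using char_mod[OF assms(1), of "n ^ (q-1)"] char_mod[OF assms(1), of 1] by simp
  then show ?thesis using char_pow[OF assms(1)] assms(1) by (simp add: dirichlet_char_def)
qed

lemma char_norm_le:
  assumes "dirichlet_char q chi" "prime q"
  shows "norm (chi n) \<le> 1"
proof (cases "coprime n q")
  case True
  have "norm (chi n) ^ (q - 1) = 1"
    using char_pow_q1[OF assms True] by (simp flip: norm_power)
  moreover have "q - 1 > 0" using assms(2) prime_gt_1_nat by auto
  ultimately have "norm (chi n) = 1"
    using power_eq_imp_eq_base[of "norm (chi n)" "q - 1" 1] by simp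
  then show ?thesis by simp
next
  case False
  then have "chi n = 0" using assms(1) unfolding dirichlet_char_def by blast
  then show ?thesis by simp
qed

lemma chars_finite_card:
  assumes "prime q"
  shows "finite {chi. dirichlet_char q chi} \<and> card {chi. dirichlet_char q chi} \<le> q - 1"
proof -
  have q1: "q > 1" using assms prime_gt_1_nat by blast
  obtain g where g: "residue_primroot q g" using prime_primitive_root_exists[OF q1 assms] by blast
  have cg: "coprime g q" using g by (simp add: residue_primroot_def coprime_commute)
  have bij: "bij_betw (\<lambda>i. g ^ i mod q) {..<totient q} (totatives q)"
    using residue_primroot_is_generator[OF q1 g] .
  let ?C = "{chi. dirichlet_char q chi}"
  let ?R = "{z::complex. z ^ (q - 1) = 1}"
  have img: "(\<lambda>chi. chi g) ` ?C \<subseteq> ?R"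
    using char_pow_q1[OF _ assms cg] by auto
  have inj: "inj_on (\<lambda>chi. chi g) ?C"
  proof (rule inj_onI)
    fix c1 c2 assume c1: "c1 \<in> ?C" and c2: "c2 \<in> ?C" and eq: "c1 g = c2 g"
    have d1: "dirichlet_char q c1" and d2: "dirichlet_char q c2" using c1 c2 by auto
    show "c1 = c2"
    proof
      fix n
      show "c1 n = c2 n"
      proof (cases "coprime n q")
        case False
        have "c1 n = 0" "c2 n = 0" using False d1 d2 unfolding dirichlet_char_def by blast+
        then show ?thesis by simp
      next
        case True
        have nd: "\<not> q dvd n"
        proof
          assume "q dvd n"
          then have "q dvd gcd n q" by simp
          then show False using True q1 by simp
        qed
        have "n mod q > 0" using nd mod_greater_zero_iff_not_dvd by blast
        moreover have "n mod q \<le> q" using q1 by simp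
        moreover have "coprime (n mod q) q" using True q1 by simp
        ultimately have "n mod q \<in> totatives q" unfolding totatives_def by auto
        then have "n mod q \<in> (\<lambda>i. g ^ i mod q) ` {..<totient q}"
          using bij unfolding bij_betw_def by simp
        then obtain i where i0: "n mod q = g ^ i mod q" by (rule imageE)
        then have i: "g ^ i mod q = n mod q" by simp
        have "c1 n = c1 (g ^ i)" using char_mod[OF d1, of n] char_mod[OF d1, of "g^i"] i by simp
        also have "\<dots> = c1 g ^ i" using char_pow[OF d1] .
        also have "\<dots> = c2 g ^ i" using eq by simp
        also have "\<dots> = c2 (g ^ i)" using char_pow[OF d2] by simp
        also have "\<dots> = c2 n" using char_mod[OF d2, of n] char_mod[OF d2, of "g^i"] i by simp
        finally show ?thesis .
      qed
    qed
  qed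
  have fR: "finite ?R" using q1 by (intro finite_roots_unity) auto
  have "finite ?C" using inj_on_finite[OF inj img fR] .
  moreover have "card ?C \<le> card ?R" using card_inj_on_le[OF inj img fR] .
  moreover have "card ?R = q - 1" using q1 by (intro card_roots_unity_eq) auto
  ultimately show ?thesis by simp
qed



lemma inv_lt1: "(t::real) > 1 \<Longrightarrow> 1 / t < 1" by simp

lemma nat_pow_ineq: "t * n^t + (n+1)*n^t \<le> (n+1::nat)^(t+1)"
proof (induction t)
  case (Suc t)
  have "(n+1)^(Suc t+1) = (n+1) * (n+1)^(t+1)" by simp
  also have "\<dots> \<ge> (n+1) * (t * n^t + (n+1)*n^t)" by (intro mult_le_mono2 Suc.IH)
  finally have "(n+1)^(Suc t+1) \<ge> (n+1) * (t + n + 1) * n^t" by (simp add: algebra_simps)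
  moreover have "(n+1) * (t + n + 1) * n^t \<ge> Suc t * n^Suc t + (n+1)*n^Suc t"
  proof -
    have "(n+1) * (t + n + 1) \<ge> n * (t + n + 2)" by (simp add: algebra_simps)
    then have "(n+1) * (t + n + 1) * n^t \<ge> n * (t + n + 2) * n^t" by (rule mult_le_mono1)
    moreover have "n * (t + n + 2) * n^t = Suc t * n^Suc t + (n+1)*n^Suc t" by (simp add: algebra_simps)
    ultimately show ?thesis by simp
  qed
  ultimately show ?case by linarith
qed simp

lemma real_step:
  fixes N t :: nat
  assumes "N \<ge> 1" "t \<ge> 1"
  shows "1 / real (N+1) ^ (t+1) \<le> (1 / real t) * (1 / real N ^ t - 1 / real (N+1) ^ t)"
proof -
  have h0: "real (t * N^t + (N+1)*N^t) \<le> real ((N+1)^(t+1))" using nat_pow_ineq[of t N] by (rule of_nat_mono)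
  define a where "a = real N ^ t"
  define b where "b = (real N + 1) ^ t"
  define n where "n = real N + 1"
  define tt where "tt = real t"
  have h: "tt * a + n * a \<le> n * b"
  proof -
    have "real t * real N ^ t + (real N + 1) * real N ^ t \<le> (real N + 1) ^ (t + 1)"
      using h0 by (simp only: of_nat_add of_nat_mult of_nat_power of_nat_1)
    then show ?thesis unfolding a_def b_def n_def tt_def by (simp add: mult.commute)
  qed
  have a0: "a > 0" unfolding a_def using assms by simp
  have b0: "b > 0" unfolding b_def by simp
  have n0: "n > 0" unfolding n_def by simp
  have t0: "tt > 0" unfolding tt_def using assms by simp
  have c: "real (N+1) ^ (t+1) = n * b" unfolding n_def b_def by (simp add: add.commute)
  have eq: "(1 / tt) * (1 / a - 1 / b) - 1 / (n * b) = (n * (b - a) - tt * a) / (tt * a * (n * b))"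
    using a0 b0 n0 t0 by (simp add: field_simps)
  have "(n * (b - a) - tt * a) / (tt * a * (n * b)) \<ge> 0"
    using h a0 b0 n0 t0 by (intro divide_nonneg_pos) (auto simp: algebra_simps)
  then have "1 / (n * b) \<le> (1 / tt) * (1 / a - 1 / b)" using eq by linarith
  moreover have r: "real (N+1) = real N + 1" by simp
  moreover have c': "(real N + 1) ^ (t+1) = n * b" unfolding n_def b_def by simp
  ultimately show ?thesis by (simp only: r c' a_def[symmetric] b_def[symmetric] tt_def[symmetric])
qed

lemma tele_sum:
  fixes P t :: nat
  assumes "P \<ge> 1" "t \<ge> 1" "N \<ge> P"
  shows "(\<Sum>n\<in>{P<..N}. 1 / real n ^ (t+1)) \<le> (1 / real t) * (1 / real P ^ t - 1 / real N ^ t)"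
  using assms(3)
proof (induction N rule: dec_induct)
  case base
  then show ?case by simp
next
  case (step N)
  have "{P<..Suc N} = insert (Suc N) {P<..N}" using step(1) by auto
  then have "(\<Sum>n\<in>{P<..Suc N}. 1 / real n ^ (t+1)) = 1 / real (N+1) ^ (t+1) + (\<Sum>n\<in>{P<..N}. 1 / real n ^ (t+1))"
    by simp
  also have "\<dots> \<le> (1 / real t) * (1 / real N ^ t - 1 / real (N+1) ^ t) + (1 / real t) * (1 / real P ^ t - 1 / real N ^ t)"
    using step real_step[of N t] assms by (intro add_mono) auto
  also have "\<dots> = (1 / real t) * (1 / real P ^ t - 1 / real (Suc N) ^ t)" by (simp add: algebra_simps)
  finally show ?case .
qed

lemma tele_bound:
  fixes P t :: nat
  assumes "P \<ge> 1" "t \<ge> 1" "finite F" "F \<subseteq> {P<..}"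
  shows "(\<Sum>n\<in>F. 1 / real n ^ (t+1)) \<le> 1 / (real t * real P ^ t)"
proof -
  define N where "N = max P (Max (insert P F))"
  have "F \<subseteq> {P<..N}" using assms(3,4) unfolding N_def by auto
  then have "(\<Sum>n\<in>F. 1 / real n ^ (t+1)) \<le> (\<Sum>n\<in>{P<..N}. 1 / real n ^ (t+1))"
    by (intro sum_mono2) auto
  also have "\<dots> \<le> (1 / real t) * (1 / real P ^ t - 1 / real N ^ t)"
    using tele_sum[OF assms(1,2)] unfolding N_def by auto
  also have "\<dots> \<le> (1 / real t) * (1 / real P ^ t)" by (intro mult_left_mono) auto
  also have "\<dots> = 1 / (real t * real P ^ t)" by simp
  finally show ?thesis .
qed

lemma geom_bound:
  fixes y :: real
  assumes "0 \<le> y" "y < 1" "finite F" "F \<subseteq> {a..}"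
  shows "(\<Sum>k\<in>F. y ^ k) \<le> y ^ a / (1 - y)"
proof -
  have eq: "(\<Sum>k\<in>{a..<a+n}. y ^ k) = (y^a - y^(a+n)) / (1 - y)" for n
  proof (induction n)
    case (Suc n)
    have "{a..<a + Suc n} = insert (a+n) {a..<a+n}" by auto
    then have "(\<Sum>k\<in>{a..<a+Suc n}. y ^ k) = y^(a+n) + (y^a - y^(a+n)) / (1 - y)"
      using Suc by simp
    also have "\<dots> = (y^a - y^(a+Suc n)) / (1 - y)" using assms(2) by (simp add: field_simps)
    finally show ?case .
  qed simp
  define n where "n = Max (insert 0 F) + 1"
  have "F \<subseteq> {a..<a+n}"
  proof
    fix x assume x: "x \<in> F"
    have "x \<le> Max (insert 0 F)" using x assms(3) by (intro Max_ge) auto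
    then show "x \<in> {a..<a+n}" using x assms(4) unfolding n_def by auto
  qed
  then have "(\<Sum>k\<in>F. y ^ k) \<le> (\<Sum>k\<in>{a..<a+n}. y ^ k)"
    using assms(1) by (intro sum_mono2) auto
  also have "\<dots> = (y^a - y^(a+n)) / (1 - y)" by (rule eq)
  also have "\<dots> \<le> y^a / (1 - y)" using assms(1,2) by (intro divide_right_mono) auto
  finally show ?thesis .
qed


lemma log_LP_bound:
  fixes f :: "nat \<Rightarrow> complex"
  assumes P: "P \<ge> 2" and s: "s \<ge> 2" and f: "\<And>n. norm (f n) \<le> 1"
  shows "norm (log_LP P s f) \<le> 2 / (real (s-1) * real P ^ (s-1))"
proof -
  define A where "A = {p. prime p \<and> p > P}"
  define g where "g p = Ln (1 - f p / of_nat p ^ s)" for p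
  define B where "B = 2 / (real (s-1) * real P ^ (s-1))"
  have B0: "B \<ge> 0" unfolding B_def by simp
  have gb: "norm (g p) \<le> 2 * (1 / real p ^ s)" if "p \<in> A" for p
  proof -
    have p3: "p \<ge> 3" using that P unfolding A_def by auto
    have pp: "real p ^ s \<ge> real p" using p3 s by (intro self_le_power) auto
    have nz: "norm (- (f p / of_nat p ^ s)) = norm (f p) / real p ^ s"
      by (simp add: norm_divide norm_power)
    also have "\<dots> \<le> 1 / real p ^ s" using f[of p] p3 by (intro divide_right_mono) auto
    finally have nz': "norm (- (f p / of_nat p ^ s)) \<le> 1 / real p ^ s" .
    have p3r: "real p \<ge> 3" using p3 by simp
    have gt2: "real p ^ s > 2" using pp p3r by linarith
    have "1 / real p ^ s < 1/2" using gt2 by (simp add: divide_less_eq)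
    then have lt: "norm (- (f p / of_nat p ^ s)) < 1/2" using nz' by linarith
    have "norm (Ln (1 + - (f p / of_nat p ^ s))) \<le> 2 * norm (- (f p / of_nat p ^ s))"
      by (intro norm_Ln_le lt)
    then show ?thesis unfolding g_def using nz' by simp
  qed
  have fs: "(\<Sum>p\<in>F. norm (g p)) \<le> B" if "finite F" "F \<subseteq> A" for F
  proof -
    have "(\<Sum>p\<in>F. norm (g p)) \<le> (\<Sum>p\<in>F. 2 * (1 / real p ^ ((s-1)+1)))"
      using gb that s by (intro sum_mono) (auto simp del: One_nat_def)
    also have "\<dots> = 2 * (\<Sum>p\<in>F. 1 / real p ^ ((s-1)+1))" by (simp add: sum_distrib_left)
    also have "\<dots> \<le> 2 * (1 / (real (s-1) * real P ^ (s-1)))"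
      using that P s unfolding A_def by (intro mult_left_mono tele_bound) auto
    finally show ?thesis unfolding B_def by simp
  qed
  have abs: "(\<lambda>p. norm (g p)) summable_on A"
    using fs by (intro nonneg_bdd_above_summable_on bdd_aboveI) auto
  have "norm (log_LP P s f) = norm (infsum g A)"
    unfolding log_LP_def A_def g_def by simp
  also have "\<dots> \<le> infsum (\<lambda>p. norm (g p)) A" using abs by (intro norm_infsum_bound) auto
  also have "\<dots> \<le> B" using abs fs by (intro infsum_le_finite_sums) auto
  finally show ?thesis unfolding B_def .
qed

lemma mu_norm: "norm (of_int (moebius_mu k) :: complex) \<le> 1"
  unfolding moebius_mu_def by (auto simp: norm_power)

lemma k_ineq:
  fixes k m K :: nat
  assumes "k > K" "m \<ge> 1"
  shows "K * (K+1) * m \<le> k * (k*m - 1)"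
proof -
  have "K * m \<le> k*m - 1"
  proof -
    have "(K+1)*m \<le> k*m" using assms by (intro mult_le_mono1) auto
    moreover have "(K+1)*m = K*m + m" by simp
    ultimately show ?thesis using assms by linarith
  qed
  moreover have "K+1 \<le> k" using assms by simp
  ultimately have "(K+1) * (K*m) \<le> k * (k*m-1)" by (intro mult_le_mono) auto
  then show ?thesis by (simp add: algebra_simps)
qed

lemma k_sum_bound:
  fixes chi :: "nat \<Rightarrow> complex"
  assumes P: "P \<ge> 2" and K: "K \<ge> 1" and m: "m \<ge> 1" and f: "\<And>n. norm (chi n) \<le> 1"
  shows "norm (\<Sum>\<^sub>\<infinity>k\<in>{K<..}. (of_int (moebius_mu k) / of_nat k) *
            log_LP P (k * m) (\<lambda>n. chi n ^ (k * m)))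
         \<le> (2 * real P / (real K * (real K + 1) * real m)) * ((1 / real P ^ m) ^ (K+1) / (1 - 1 / real P ^ m))"
proof -
  define y where "y = 1 / real P ^ m"
  define C where "C = 2 * real P / (real K * (real K + 1) * real m)"
  define h where "h k = (of_int (moebius_mu k) / of_nat k) * log_LP P (k * m) (\<lambda>n. chi n ^ (k * m))" for k
  have Pm: "real P ^ m \<ge> real P" using P m by (intro self_le_power) auto
  have Pr: "real P \<ge> 2" using P by simp
  have gt1: "real P ^ m > 1" using Pm Pr by linarith
  have y0: "0 \<le> y" unfolding y_def by simp
  have y1: "y < 1" unfolding y_def using gt1 by (rule inv_lt1)
  have C0: "C \<ge> 0" unfolding C_def by simp
  have hb: "norm (h k) \<le> C * y ^ k" if k: "k \<in> {K<..}" for k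
  proof -
    have kK: "k > K" using k by simp
    have km: "k * m \<ge> 2"
    proof -
      have "k \<le> k * m" using m by simp
      then show ?thesis using kK K by linarith
    qed
    have fb: "norm (chi n ^ (k*m)) \<le> 1" for n using f[of n] by (simp add: norm_power power_le_one)
    have L: "norm (log_LP P (k*m) (\<lambda>n. chi n ^ (k * m))) \<le> 2 / (real (k*m-1) * real P ^ (k*m-1))"
      by (rule log_LP_bound[OF P km]) (use fb in simp)
    have "norm (h k) = norm (of_int (moebius_mu k) :: complex) / real k * norm (log_LP P (k*m) (\<lambda>n. chi n ^ (k * m)))"
      unfolding h_def by (simp add: norm_mult norm_divide)
    also have "\<dots> \<le> 1 / real k * (2 / (real (k*m-1) * real P ^ (k*m-1)))"
      using mu_norm[of k] L kK by (intro mult_mono divide_right_mono) auto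
    also have "\<dots> = 2 * real P / (real k * real (k*m-1) * real P ^ (k*m))"
    proof -
      have kmS: "k*m = Suc (k*m-1)" using km by simp
      have "real P ^ (k*m) = real P * real P ^ (k*m-1)" by (subst kmS) simp
      then show ?thesis using P by (simp add: field_simps)
    qed
    also have "\<dots> \<le> 2 * real P / (real K * (real K + 1) * real m * real P ^ (k*m))"
    proof -
      have "real (K * (K+1) * m) \<le> real (k * (k*m - 1))" using k_ineq[OF kK m] by linarith
      then have i: "real K * (real K + 1) * real m \<le> real k * real (k*m-1)"
        by (simp only: of_nat_mult of_nat_add of_nat_1)
      have pos: "real K * (real K + 1) * real m * real P ^ (k*m) > 0" using K m P by simp
      have "real (k*m) \<ge> real 2" using km by (rule of_nat_mono)
      then have kmr: "real k * real m \<ge> 2" by simp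
      show ?thesis using i pos P kK K m km kmr
        by (intro divide_left_mono mult_right_mono mult_pos_pos) auto
    qed
    also have "\<dots> = C * y ^ k"
    proof -
      have pe: "real P ^ (k*m) = (real P ^ m) ^ k" by (simp add: power_mult[symmetric] mult.commute)
      show ?thesis unfolding C_def y_def pe by (simp add: power_one_over field_simps)
    qed
    finally show ?thesis .
  qed
  have fs: "(\<Sum>k\<in>F. norm (h k)) \<le> C * (y ^ (K+1) / (1 - y))" if "finite F" "F \<subseteq> {K<..}" for F
  proof -
    have "(\<Sum>k\<in>F. norm (h k)) \<le> (\<Sum>k\<in>F. C * y ^ k)" using hb that by (intro sum_mono) auto
    also have "\<dots> = C * (\<Sum>k\<in>F. y ^ k)" by (simp add: sum_distrib_left)
    also have "\<dots> \<le> C * (y ^ (K+1) / (1 - y))"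
      using that y0 y1 C0 by (intro mult_left_mono geom_bound) auto
    finally show ?thesis .
  qed
  have abs: "(\<lambda>k. norm (h k)) summable_on {K<..}"
    using fs by (intro nonneg_bdd_above_summable_on bdd_aboveI) auto
  have "norm (infsum h {K<..}) \<le> infsum (\<lambda>k. norm (h k)) {K<..}" using abs by (intro norm_infsum_bound) auto
  also have "\<dots> \<le> C * (y ^ (K+1) / (1 - y))" using abs fs by (intro infsum_le_finite_sums) auto
  finally show ?thesis unfolding h_def C_def y_def by simp
qed



lemma m_bound:
  fixes P K m :: nat
  assumes P: "P \<ge> 2" and K: "K \<ge> 1" and m: "m \<ge> 1"
  shows "(1 / real m) * ((2 * real P / (real K * (real K + 1) * real m)) * ((1 / real P ^ m) ^ (K+1) / (1 - 1 / real P ^ m)))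
    \<le> (2 * real P / (real K * (real K + 1))) * (real P / (real P - 1)) * (1 / real P ^ (K+1)) ^ m"
proof -
  define y where "y = 1 / real P ^ m"
  define x where "x = 1 / real P ^ (K+1)"
  define c where "c = 2 * real P / (real K * (real K + 1))"
  have Pr: "real P \<ge> 2" using P by simp
  have Pm: "real P ^ m \<ge> real P" using P m by (intro self_le_power) auto
  have yle: "y \<le> 1 / real P" unfolding y_def using Pm Pr by (intro divide_left_mono) auto
  have ypos: "y \<ge> 0" unfolding y_def by simp
  have omy: "1 - y \<ge> (real P - 1) / real P" using yle Pr by (simp add: field_simps)
  have omy0: "(real P - 1) / real P > 0" using Pr by simp
  have a: "1 / (1 - y) \<le> real P / (real P - 1)"
  proof -
    have "1 - y > 0" using omy omy0 by linarith
    then have "1 / (1 - y) \<le> 1 / ((real P - 1) / real P)" using omy omy0 by (intro divide_left_mono mult_pos_pos) auto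
    then show ?thesis by simp
  qed
  have pp: "(real P ^ m) ^ (K+1) = (real P ^ (K+1)) ^ m"
    by (simp only: power_mult[symmetric] mult.commute)
  have xm: "y ^ (K+1) = x ^ m" unfolding x_def y_def power_one_over pp ..
  have mr: "real m \<ge> 1" using m by simp
  have "real m * real m \<ge> 1 * 1" using mr by (intro mult_mono) auto
  then have b: "1 / (real m * real m) \<le> 1" by simp
  have c0: "c \<ge> 0" unfolding c_def by simp
  have x0: "x ^ m \<ge> 0" unfolding x_def by simp
  have "(1 / real m) * ((2 * real P / (real K * (real K + 1) * real m)) * (y ^ (K+1) / (1 - y)))
     = c * (1 / (real m * real m)) * x ^ m * (1 / (1 - y))"
    unfolding c_def xm by (simp add: field_simps)
  also have "\<dots> \<le> c * 1 * x ^ m * (real P / (real P - 1))"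
    using a b c0 x0 omy omy0 by (intro mult_mono) auto
  finally show ?thesis unfolding c_def x_def y_def by (simp add: mult_ac)
qed

lemma final_arith:
  fixes P K :: nat
  assumes P: "P \<ge> 2" and K: "K \<ge> 1"
  shows "(2 * real P / (real K * (real K + 1))) * (real P / (real P - 1)) * (1 / (real P ^ (K+1) - 1))
     \<le> 2 * real P / ((real K)^2 * (real P - 1) * (real P ^ K - 1))"
proof -
  define A where "A = real P ^ K"
  have Pr: "real P \<ge> 2" using P by simp
  have A2: "A \<ge> real P" unfolding A_def using Pr K by (intro self_le_power) auto
  have Kr: "real K \<ge> 1" using K by simp
  have PA: "real P ^ (K+1) = real P * A" unfolding A_def by simp
  have PKA: "real P ^ K = A" unfolding A_def by simp
  have pA: "A - 1 > 0" using A2 Pr by simp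
  have pPA: "real P * A - 1 > 0" using A2 Pr by (smt (verit) mult_le_cancel_right1)
  define u where "u = 2 * real P / (real P - 1)"
  define X where "X = real K * (real K + 1) * (real P * A - 1)"
  define Y where "Y = (real K)^2 * (A - 1)"
  have X0: "X > 0" unfolding X_def using Kr pPA by simp
  have Y0: "Y > 0" unfolding Y_def using Kr pA by simp
  have u0: "u \<ge> 0" unfolding u_def using Pr by simp
  have key: "real P * real K * (A - 1) \<le> (real K + 1) * (real P * A - 1)"
  proof -
    have "real P * (A - 1) \<le> real P * A - 1" using Pr by (simp add: algebra_simps)
    then have "real K * (real P * (A - 1)) \<le> (real K + 1) * (real P * A - 1)"
      using Kr pA Pr pPA by (intro mult_mono) auto
    then show ?thesis by (simp add: algebra_simps)
  qed
  have key2: "real P * Y \<le> X"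
  proof -
    have "real P * Y = real K * (real P * real K * (A - 1))" unfolding Y_def by (simp add: power2_eq_square algebra_simps)
    also have "\<dots> \<le> real K * ((real K + 1) * (real P * A - 1))" using key Kr by (intro mult_left_mono) auto
    also have "\<dots> = X" unfolding X_def by (simp add: algebra_simps)
    finally show ?thesis .
  qed
  have frac: "real P / X \<le> 1 / Y"
    using key2 X0 Y0 by (simp add: divide_le_eq le_divide_eq field_simps)
  have "(2 * real P / (real K * (real K + 1))) * (real P / (real P - 1)) * (1 / (real P ^ (K+1) - 1))
        = u * (real P / X)" unfolding u_def X_def PA by simp
  also have "\<dots> \<le> u * (1 / Y)" using frac u0 by (intro mult_left_mono)
  also have "\<dots> = 2 * real P / ((real K)^2 * (real P - 1) * (real P ^ K - 1))"
    unfolding u_def Y_def PKA by (simp add: mult_ac)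
  finally show ?thesis .
qed

theorem mainTheorem8:
  fixes q P M K :: nat
  assumes "prime q" and "P \<ge> 2" and "M \<ge> 1" and "K \<ge> 1"
  shows "norm (E2 q P M K) \<le>
    2 * real P * (real q - 1) / ((real K)^2 * (real P - 1) * (real P ^ K - 1))"
proof -
  note q = assms(1) and P = assms(2) and K = assms(4)
  define S where "S = {chi. dirichlet_char q chi \<and> chi \<noteq> principal_char q}"
  define x where "x = 1 / real P ^ (K+1)"
  define c where "c = (2 * real P / (real K * (real K + 1))) * (real P / (real P - 1))"
  define D where "D = c * (1 / (real P ^ (K+1) - 1))"
  have Pr: "real P \<ge> 2" using P by simp
  have PK: "real P ^ (K+1) \<ge> real P" using Pr by (intro self_le_power) auto
  have x0: "x \<ge> 0" unfolding x_def by simp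
  have gtx: "real P ^ (K+1) > 1" using PK Pr by linarith
  have x1: "x < 1" unfolding x_def using gtx by (rule inv_lt1)
  have c0: "c \<ge> 0" unfolding c_def using Pr by simp
  have CS: "finite S \<and> card S \<le> q - 1"
  proof -
    have sub: "S \<subseteq> {chi. dirichlet_char q chi}" unfolding S_def by auto
    have "finite {chi. dirichlet_char q chi} \<and> card {chi. dirichlet_char q chi} \<le> q - 1"
      by (rule chars_finite_card[OF q])
    then show ?thesis using sub by (meson card_mono finite_subset le_trans)
  qed
  have inner: "norm (\<Sum>m=1..M. (1 / of_nat m) *
        (\<Sum>\<^sub>\<infinity>k\<in>{K<..}. (of_int (moebius_mu k) / of_nat k) *
            log_LP P (k * m) (\<lambda>n. chi n ^ (k * m)))) \<le> D" if chi: "chi \<in> S" for chi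
  proof -
    have f: "\<And>n. norm (chi n) \<le> 1" using chi char_norm_le[OF _ q] unfolding S_def by blast
    have "norm (\<Sum>m=1..M. (1 / of_nat m) *
        (\<Sum>\<^sub>\<infinity>k\<in>{K<..}. (of_int (moebius_mu k) / of_nat k) *
            log_LP P (k * m) (\<lambda>n. chi n ^ (k * m))))
      \<le> (\<Sum>m=1..M. norm ((1 / of_nat m) *
        (\<Sum>\<^sub>\<infinity>k\<in>{K<..}. (of_int (moebius_mu k) / of_nat k) *
            log_LP P (k * m) (\<lambda>n. chi n ^ (k * m)))))" by (rule norm_sum)
    also have "\<dots> \<le> (\<Sum>m=1..M. c * x ^ m)"
    proof (intro sum_mono)
      fix m assume "m \<in> {1..M}"
      then have m: "m \<ge> 1" by simp
      have "norm ((1 / of_nat m) *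
        (\<Sum>\<^sub>\<infinity>k\<in>{K<..}. (of_int (moebius_mu k) / of_nat k) *
            log_LP P (k * m) (\<lambda>n. chi n ^ (k * m))))
        = (1 / real m) * norm (\<Sum>\<^sub>\<infinity>k\<in>{K<..}. (of_int (moebius_mu k) / of_nat k) *
            log_LP P (k * m) (\<lambda>n. chi n ^ (k * m)))"
        by (simp add: norm_mult norm_divide)
      also have "\<dots> \<le> (1 / real m) * ((2 * real P / (real K * (real K + 1) * real m)) * ((1 / real P ^ m) ^ (K+1) / (1 - 1 / real P ^ m)))"
        using k_sum_bound[OF P K m f] by (intro mult_left_mono) auto
      also have "\<dots> \<le> c * x ^ m" unfolding c_def x_def using m_bound[OF P K m] .
      finally show "norm ((1 / of_nat m) *
        (\<Sum>\<^sub>\<infinity>k\<in>{K<..}. (of_int (moebius_mu k) / of_nat k) *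
            log_LP P (k * m) (\<lambda>n. chi n ^ (k * m)))) \<le> c * x ^ m" .
    qed
    also have "\<dots> = c * (\<Sum>m=1..M. x ^ m)" by (simp add: sum_distrib_left)
    also have "\<dots> \<le> c * (x ^ 1 / (1 - x))" using x0 x1 c0 by (intro mult_left_mono geom_bound) auto
    also have "\<dots> = D" unfolding D_def x_def using PK Pr by (simp add: field_simps)
    finally show ?thesis .
  qed
  have "norm (E2 q P M K) \<le> (\<Sum>chi\<in>S. norm (\<Sum>m=1..M. (1 / of_nat m) *
        (\<Sum>\<^sub>\<infinity>k\<in>{K<..}. (of_int (moebius_mu k) / of_nat k) *
            log_LP P (k * m) (\<lambda>n. chi n ^ (k * m)))))"
    unfolding E2_def S_def by (rule norm_sum)
  also have "\<dots> \<le> (\<Sum>chi\<in>S. D)" using inner by (intro sum_mono) auto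
  also have "\<dots> = real (card S) * D" by simp
  also have "\<dots> \<le> (real q - 1) * D"
  proof -
    have "real (card S) \<le> real q - 1" using CS prime_gt_1_nat[OF q] by linarith
    moreover have "D \<ge> 0" unfolding D_def using c0 gtx by simp
    ultimately show ?thesis by (intro mult_right_mono)
  qed
  also have "\<dots> \<le> (real q - 1) * (2 * real P / ((real K)^2 * (real P - 1) * (real P ^ K - 1)))"
    using final_arith[OF P K] prime_gt_1_nat[OF q] unfolding D_def c_def
    by (intro mult_left_mono) auto
  also have "\<dots> = 2 * real P * (real q - 1) / ((real K)^2 * (real P - 1) * (real P ^ K - 1))"
    by simp
  finally show ?thesis .
qed

end
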